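(* Let $k\ge1$. The generating function of spanning oriented forests of the hypercube $\{0,1\}^k$, with a weight $z$ per root and a weight $y_i^j$ for each edge changing the $i$-th coordinate to the value $j$, is $$\prod_{J\subseteq\{1,\dots,k\}}\Big(z+\sum_{i\in J}(y_i^0+y_i^1)\Big).$$
   Context: The hypercube $\{0,1\}^k$ is viewed as a directed graph with, for any two points differing in exactly one coordinate, an edge in each direction. A spanning oriented forest is a subgraph containing all vertices, with no cycle, in which every vertex has outdegree $0$ or $1$; the vertices of outdegree $0$ are its roots. Its weight is $z^{\#\text{roots}}$ times the product of the weights of its edges, where an edge changing coordinate $i$ to the value $j\in\{0,1\}$ has weight $y_i^j$; $z,y_i^j$ are indeterminates. The product is over all subsets $J$, including $J=\emptyset$. *)

theory Defs
  imports "HOL-Library.FuncSet"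
begin

text \<open>Vertices of the hypercube {0,1}^k: functions on the coordinates {1..k} with values in bool
  (False = 0, True = 1), extensional (undefined outside {1..k}).\<close>
definition cube_vertices :: "nat \<Rightarrow> (nat \<Rightarrow> bool) set" where
  "cube_vertices k = {1..k} \<rightarrow>\<^sub>E (UNIV :: bool set)"

definition cube_edges :: "nat \<Rightarrow> ((nat \<Rightarrow> bool) \<times> (nat \<Rightarrow> bool)) set" where
  "cube_edges k = {(x, y). x \<in> cube_vertices k \<and> y \<in> cube_vertices k \<and>
                           card {i \<in> {1..k}. x i \<noteq> y i} = 1}"

definition spanning_oriented_forests :: "nat \<Rightarrow> ((nat \<Rightarrow> bool) \<times> (nat \<Rightarrow> bool)) set set" where
  "spanning_oriented_forests k = {F. F \<subseteq> cube_edges k \<and> acyclic F \<and>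
       (\<forall>x \<in> cube_vertices k. card {y. (x, y) \<in> F} \<le> 1)}"

definition forest_roots :: "nat \<Rightarrow> ((nat \<Rightarrow> bool) \<times> (nat \<Rightarrow> bool)) set \<Rightarrow> (nat \<Rightarrow> bool) set" where
  "forest_roots k F = {x \<in> cube_vertices k. \<forall>y. (x, y) \<notin> F}"

definition edge_coord :: "nat \<Rightarrow> (nat \<Rightarrow> bool) \<Rightarrow> (nat \<Rightarrow> bool) \<Rightarrow> nat" where
  "edge_coord k x y = (THE i. i \<in> {1..k} \<and> x i \<noteq> y i)"

text \<open>Weight of an edge x \<rightarrow> y changing coordinate i to value j = y i: the value yw i j
  (yw i False = y_i^0, yw i True = y_i^1).\<close>
definition edge_weight :: "nat \<Rightarrow> (nat \<Rightarrow> bool \<Rightarrow> 'a) \<Rightarrow> (nat \<Rightarrow> bool) \<Rightarrow> (nat \<Rightarrow> bool) \<Rightarrow> 'a" where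
  "edge_weight k yw x y = (let i = edge_coord k x y in yw i (y i))"

definition forest_weight :: "nat \<Rightarrow> 'a::comm_ring_1 \<Rightarrow> (nat \<Rightarrow> bool \<Rightarrow> 'a)
     \<Rightarrow> ((nat \<Rightarrow> bool) \<times> (nat \<Rightarrow> bool)) set \<Rightarrow> 'a" where
  "forest_weight k z yw F = z ^ card (forest_roots k F) * (\<Prod>(x, y) \<in> F. edge_weight k yw x y)"

end

theory Submission
  imports Defs "Jordan_Normal_Form.Determinant"
begin


definition detV :: "'v set \<Rightarrow> ('v \<Rightarrow> 'v \<Rightarrow> 'a::comm_ring_1) \<Rightarrow> 'a" where
  "detV V M = (\<Sum>p\<in>{p. p permutes V}. of_int (sign p) * (\<Prod>x\<in>V. M x (p x)))"

definition mulV :: "'v set \<Rightarrow> ('v \<Rightarrow> 'v \<Rightarrow> 'a::comm_ring_1) \<Rightarrow> ('v \<Rightarrow> 'v \<Rightarrow> 'a) \<Rightarrow> 'v \<Rightarrow> 'v \<Rightarrow> 'a" where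
  "mulV V M N = (\<lambda>x y. \<Sum>w\<in>V. M x w * N w y)"

lemma detV_cong:
  assumes "\<And>x y. x \<in> V \<Longrightarrow> y \<in> V \<Longrightarrow> M x y = N x y"
  shows "detV V M = detV V N"
  unfolding detV_def
proof (intro sum.cong refl)
  fix p assume "p \<in> {p. p permutes V}"
  hence p: "p permutes V" by simp
  show "of_int (sign p) * (\<Prod>x\<in>V. M x (p x)) = of_int (sign p) * (\<Prod>x\<in>V. N x (p x))"
    using assms permutes_in_image[OF p] by (intro arg_cong2[where f="(*)"] prod.cong refl) auto
qed

lemma detV_diag_only:
  assumes fin: "finite V"
    and nz: "\<And>p. p permutes V \<Longrightarrow> p \<noteq> id \<Longrightarrow> \<exists>x\<in>V. M x (p x) = 0"
  shows "detV V M = (\<Prod>x\<in>V. M x x)"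
proof -
  have finP: "finite {p. p permutes V}" using fin by (rule finite_permutations)
  have idin: "id \<in> {p. p permutes V}" by (simp add: permutes_id)
  have "detV V M = of_int (sign (id::'a\<Rightarrow>'a)) * (\<Prod>x\<in>V. M x (id x))
      + (\<Sum>p\<in>{p. p permutes V} - {id}. of_int (sign p) * (\<Prod>x\<in>V. M x (p x)))"
    unfolding detV_def by (rule sum.remove[OF finP idin])
  also have "(\<Sum>p\<in>{p. p permutes V} - {id}. of_int (sign p) * (\<Prod>x\<in>V. M x (p x))) = 0"
  proof (intro sum.neutral ballI)
    fix p assume "p \<in> {p. p permutes V} - {id}"
    then obtain x where "x \<in> V" "M x (p x) = 0" using nz by blast
    hence "(\<Prod>x\<in>V. M x (p x)) = 0" using fin by (intro prod_zero) auto
    thus "of_int (sign p) * (\<Prod>x\<in>V. M x (p x)) = 0" by simp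
  qed
  finally show ?thesis by simp
qed

lemma detV_triangular:
  fixes h :: "'v \<Rightarrow> int"
  assumes fin: "finite V"
    and tri: "\<And>x w. x \<in> V \<Longrightarrow> w \<in> V \<Longrightarrow> x \<noteq> w \<Longrightarrow> M x w \<noteq> 0 \<Longrightarrow> h x < h w"
  shows "detV V M = (\<Prod>x\<in>V. M x x)"
proof (rule detV_diag_only[OF fin])
  fix p assume p: "p permutes V" and pid: "p \<noteq> id"
  show "\<exists>x\<in>V. M x (p x) = 0"
  proof (rule ccontr)
    assume "\<not> ?thesis"
    hence all: "\<And>x. x \<in> V \<Longrightarrow> M x (p x) \<noteq> 0" by blast
    obtain x0 where x0: "p x0 \<noteq> x0" using pid by (auto simp: fun_eq_iff)
    hence x0V: "x0 \<in> V" using p by (meson permutes_not_in)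
    have le: "\<forall>x\<in>V. h x \<le> h (p x)"
    proof
      fix x assume x: "x \<in> V"
      show "h x \<le> h (p x)"
      proof (cases "p x = x")
        case False thus ?thesis using tri[OF x _ False[symmetric] all[OF x]] permutes_in_image[OF p] x by force
      qed simp
    qed
    have "sum h V < sum (\<lambda>x. h (p x)) V"
      using x0V x0 tri[OF x0V _ x0[symmetric] all[OF x0V]] permutes_in_image[OF p]
      by (intro sum_strict_mono_ex1[OF fin le]) auto
    also have "sum (\<lambda>x. h (p x)) V = sum h V"
      using sum.permute[OF p, of h] by (simp add: o_def)
    finally show False by simp
  qed
qed

lemma detV_transfer:
  fixes M :: "'v \<Rightarrow> 'v \<Rightarrow> 'a::comm_ring_1"
  assumes fin: "finite V" and d: "bij_betw d {0..<card V} V"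
  shows "det (mat (card V) (card V) (\<lambda>(i,j). M (d i) (d j))) = detV V M"
proof -
  define n where "n = card V"
  define e where "e = inv_into {0..<n} d"
  have d': "bij_betw d {0..<n} V" using d by (simp add: n_def)
  have e: "bij_betw e V {0..<n}" using d' unfolding e_def by (simp add: bij_betw_inv_into)
  have ed: "\<And>i. i \<in> {0..<n} \<Longrightarrow> e (d i) = i" using d' unfolding e_def
    by (meson bij_betw_inv_into_left)
  have de: "\<And>x. x \<in> V \<Longrightarrow> d (e x) = x" using d' unfolding e_def
    by (meson bij_betw_inv_into_right)
  have dV: "\<And>i. i \<in> {0..<n} \<Longrightarrow> d i \<in> V" using d' by (meson bij_betwE)
  have eV: "\<And>x. x \<in> V \<Longrightarrow> e x \<in> {0..<n}" using e by (meson bij_betwE)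
  define \<Phi> where "\<Phi> = (\<lambda>p i. if i \<in> {0..<n} then e (p (d i)) else i)"
  define \<Psi> where "\<Psi> = (\<lambda>q x. if x \<in> V then d (q (e x)) else x)"
  have PB: "permutes_bij_finite p V {0..<n} e d" if "p permutes V" for p
    using that e de fin unfolding permutes_bij_finite_def permutes_bij_def permutes_bij_finite_axioms_def
    by auto
  have PB2: "permutes_bij q {0..<n} V d e" if "q permutes {0..<n}" for q
    using that d' ed unfolding permutes_bij_def by auto
  have Phi_perm: "\<Phi> p permutes {0..<n}" if "p permutes V" for p
    using permutes_bij.permutes_p'[OF permutes_bij_finite.axioms(1)[OF PB[OF that]]]
    unfolding \<Phi>_def .
  have Phi_sign: "sign (\<Phi> p) = sign p" if "p permutes V" for p
    using permutes_bij_finite.sign_p'[OF PB[OF that]] unfolding \<Phi>_def .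
  have Psi_perm: "\<Psi> q permutes V" if "q permutes {0..<n}" for q
    using permutes_bij.permutes_p'[OF PB2[OF that]] unfolding \<Psi>_def .
  have bij: "bij_betw \<Phi> {p. p permutes V} {q. q permutes {0..<n}}"
  proof (rule bij_betw_byWitness[where f'=\<Psi>])
    show "\<forall>p\<in>{p. p permutes V}. \<Psi> (\<Phi> p) = p"
    proof (intro ballI ext)
      fix p x assume p: "p \<in> {p. p permutes V}"
      hence p: "p permutes V" by simp
      show "\<Psi> (\<Phi> p) x = p x"
        using permutes_in_image[OF p] permutes_not_in[OF p] de eV
        unfolding \<Psi>_def \<Phi>_def by auto
    qed
    show "\<forall>q\<in>{q. q permutes {0..<n}}. \<Phi> (\<Psi> q) = q"
    proof (intro ballI ext)
      fix q i assume q: "q \<in> {q. q permutes {0..<n}}"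
      hence q: "q permutes {0..<n}" by simp
      show "\<Phi> (\<Psi> q) i = q i"
        using permutes_in_image[OF q] permutes_not_in[OF q] ed dV
        unfolding \<Psi>_def \<Phi>_def by auto
    qed
    show "\<Phi> ` {p. p permutes V} \<subseteq> {q. q permutes {0..<n}}" using Phi_perm by auto
    show "\<Psi> ` {q. q permutes {0..<n}} \<subseteq> {p. p permutes V}" using Psi_perm by auto
  qed
  have "det (mat n n (\<lambda>(i,j). M (d i) (d j))) =
     (\<Sum>q\<in>{q. q permutes {0..<n}}. of_int (sign q) * (\<Prod>i = 0..<n. M (d i) (d (q i))))"
    by (subst det_def'[of _ n]) (auto intro!: sum.cong prod.cong simp: permutes_in_image)
  also have "\<dots> = (\<Sum>p\<in>{p. p permutes V}. of_int (sign (\<Phi> p)) * (\<Prod>i = 0..<n. M (d i) (d (\<Phi> p i))))"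
    by (rule sum.reindex_bij_betw[OF bij, symmetric])
  also have "\<dots> = (\<Sum>p\<in>{p. p permutes V}. of_int (sign p) * (\<Prod>x\<in>V. M x (p x)))"
  proof (intro sum.cong refl)
    fix p assume "p \<in> {p. p permutes V}"
    hence p: "p permutes V" by simp
    have "(\<Prod>i = 0..<n. M (d i) (d (\<Phi> p i))) = (\<Prod>i = 0..<n. M (d i) (p (d i)))"
      using permutes_in_image[OF p] dV de unfolding \<Phi>_def by (intro prod.cong) auto
    also have "\<dots> = (\<Prod>x\<in>V. M x (p x))"
      by (rule prod.reindex_bij_betw[OF d', of "\<lambda>x. M x (p x)"])
    finally show "of_int (sign (\<Phi> p)) * (\<Prod>i = 0..<n. M (d i) (d (\<Phi> p i))) = of_int (sign p) * (\<Prod>x\<in>V. M x (p x))"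
      using Phi_sign[OF p] by simp
  qed
  finally show ?thesis unfolding detV_def n_def .
qed



lemma detV_mult:
  fixes M N :: "'v \<Rightarrow> 'v \<Rightarrow> 'a::comm_ring_1"
  assumes fin: "finite V"
  shows "detV V (mulV V M N) = detV V M * detV V N"
proof -
  obtain d where d: "bij_betw d {0..<card V} V" using ex_bij_betw_nat_finite[OF fin] by blast
  define n where "n = card V"
  have d': "bij_betw d {0..<n} V" using d by (simp add: n_def)
  have dV: "\<And>i. i \<in> {0..<n} \<Longrightarrow> d i \<in> V" using d' by (meson bij_betwE)
  define toM where "toM = (\<lambda>X :: 'v \<Rightarrow> 'v \<Rightarrow> 'a. mat n n (\<lambda>(i,j). X (d i) (d j)))"
  have car: "toM X \<in> carrier_mat n n" for X unfolding toM_def by simp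
  have prodeq: "toM (mulV V M N) = toM M * toM N"
  proof (rule eq_matI)
    fix i j assume "i < dim_row (toM M * toM N)" "j < dim_col (toM M * toM N)"
    hence ij: "i < n" "j < n" using car[of M] car[of N] by auto
    have "(toM M * toM N) $$ (i,j) = (\<Sum>l\<in>{0..<n}. M (d i) (d l) * N (d l) (d j))"
      using ij car[of M] car[of N] by (simp add: toM_def scalar_prod_def)
    also have "\<dots> = (\<Sum>w\<in>V. M (d i) w * N w (d j))"
      by (rule sum.reindex_bij_betw[OF d', of "\<lambda>w. M (d i) w * N w (d j)"])
    finally show "toM (mulV V M N) $$ (i, j) = (toM M * toM N) $$ (i, j)"
      using ij by (simp add: toM_def mulV_def)
  next
    show "dim_row (toM (mulV V M N)) = dim_row (toM M * toM N)"
      "dim_col (toM (mulV V M N)) = dim_col (toM M * toM N)"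
      using car[of M] car[of N] car[of "mulV V M N"] by auto
  qed
  have tr: "det (toM X) = detV V X" for X
    unfolding toM_def n_def by (rule detV_transfer[OF fin d])
  show ?thesis using prodeq det_mult[OF car car] tr by metis
qed

lemma detV_kernel:
  fixes M :: "'v \<Rightarrow> 'v \<Rightarrow> 'a::comm_ring_1"
  assumes fin: "finite V" and x0: "x0 \<in> V" and v0: "v x0 = 1"
    and ker: "\<And>w. w \<in> V \<Longrightarrow> (\<Sum>x\<in>V. v x * M x w) = 0"
  shows "detV V M = 0"
proof -
  obtain d where d: "bij_betw d {0..<card V} V" using ex_bij_betw_nat_finite[OF fin] by blast
  define n where "n = card V"
  have d': "bij_betw d {0..<n} V" using d by (simp add: n_def)
  define e where "e = inv_into {0..<n} d"
  have ed: "\<And>i. i \<in> {0..<n} \<Longrightarrow> e (d i) = i" using d' unfolding e_def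
    by (meson bij_betw_inv_into_left)
  have de: "\<And>x. x \<in> V \<Longrightarrow> d (e x) = x" using d' unfolding e_def
    by (meson bij_betw_inv_into_right)
  have e: "bij_betw e V {0..<n}" using d' unfolding e_def by (simp add: bij_betw_inv_into)
  have eV: "\<And>x. x \<in> V \<Longrightarrow> e x \<in> {0..<n}" using e by (meson bij_betwE)
  define A where "A = mat n n (\<lambda>(i,j). M (d i) (d j))"
  have car: "A \<in> carrier_mat n n" unfolding A_def by simp
  define B where "B = adj_mat A"
  have carB: "B \<in> carrier_mat n n" using adj_mat(1)[OF car] unfolding B_def .
  have AB: "A * B = det A \<cdot>\<^sub>m 1\<^sub>m n" using adj_mat(2)[OF car] unfolding B_def .
  define i0 where "i0 = e x0"
  have i0: "i0 < n" using eV[OF x0] unfolding i0_def by simp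
  have di0: "d i0 = x0" using de[OF x0] unfolding i0_def .
  have entry: "(A * B) $$ (i, i0) = (\<Sum>l\<in>{0..<n}. A $$ (i,l) * B $$ (l, i0))" if "i < n" for i
    using that i0 car carB by (simp add: scalar_prod_def)
  have "(\<Sum>i\<in>{0..<n}. v (d i) * (A * B) $$ (i, i0)) = (\<Sum>i\<in>{0..<n}. v (d i) * (if i = i0 then det A else 0))"
    using AB i0 by (intro sum.cong refl) auto
  also have "\<dots> = det A" using i0 di0 v0 by (simp add: if_distrib[of "\<lambda>t. v (d _) * t"] cong: if_cong)
  finally have 1: "(\<Sum>i\<in>{0..<n}. v (d i) * (A * B) $$ (i, i0)) = det A" .
  have "(\<Sum>i\<in>{0..<n}. v (d i) * (A * B) $$ (i, i0))
      = (\<Sum>i\<in>{0..<n}. \<Sum>l\<in>{0..<n}. v (d i) * (A $$ (i,l) * B $$ (l, i0)))"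
    using entry by (simp add: sum_distrib_left)
  also have "\<dots> = (\<Sum>l\<in>{0..<n}. (\<Sum>i\<in>{0..<n}. v (d i) * A $$ (i,l)) * B $$ (l, i0))"
    by (subst sum.swap) (simp add: sum_distrib_right mult.assoc)
  also have "\<dots> = 0"
  proof (intro sum.neutral ballI)
    fix l assume l: "l \<in> {0..<n}"
    have "(\<Sum>i\<in>{0..<n}. v (d i) * A $$ (i,l)) = (\<Sum>i\<in>{0..<n}. v (d i) * M (d i) (d l))"
      using l by (intro sum.cong refl) (simp add: A_def)
    also have "\<dots> = (\<Sum>x\<in>V. v x * M x (d l))"
      by (rule sum.reindex_bij_betw[OF d', of "\<lambda>x. v x * M x (d l)"])
    also have "\<dots> = 0" using ker l d' by (meson bij_betwE)
    finally show "(\<Sum>i\<in>{0..<n}. v (d i) * A $$ (i,l)) * B $$ (l, i0) = 0" by simp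
  qed
  finally have "det A = 0" using 1 by simp
  thus ?thesis unfolding A_def n_def using detV_transfer[OF fin d, of M] by simp
qed



definition flip :: "nat \<Rightarrow> (nat \<Rightarrow> bool) \<Rightarrow> nat \<Rightarrow> bool" where
  "flip i x = x(i := \<not> x i)"

lemma flip_at[simp]: "flip i x i = (\<not> x i)" by (simp add: flip_def)
lemma flip_other[simp]: "j \<noteq> i \<Longrightarrow> flip i x j = x j" by (simp add: flip_def)

lemma finite_V: "finite (cube_vertices k)"
  unfolding cube_vertices_def by (rule finite_PiE) auto

lemma flip_in: "x \<in> cube_vertices k \<Longrightarrow> i \<in> {1..k} \<Longrightarrow> flip i x \<in> cube_vertices k"
  unfolding cube_vertices_def flip_def by (auto simp: PiE_iff extensional_def)

lemma flip_neq[simp]: "flip i x \<noteq> x"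
  by (metis flip_at)

lemma flip_inj: "flip i x = flip j x \<Longrightarrow> i = j"
  by (metis flip_at flip_other)

lemma V_out: "x \<in> cube_vertices k \<Longrightarrow> j \<notin> {1..k} \<Longrightarrow> x j = undefined"
  unfolding cube_vertices_def by (auto simp: PiE_iff extensional_def)

lemma diffset_flip: "i \<in> {1..k} \<Longrightarrow> {j\<in>{1..k}. x j \<noteq> flip i x j} = {i}"
  by (auto simp: flip_def)

lemma edges_iff: "(x, y) \<in> cube_edges k \<longleftrightarrow> x \<in> cube_vertices k \<and> (\<exists>i\<in>{1..k}. y = flip i x)"
proof
  assume "(x, y) \<in> cube_edges k"
  hence x: "x \<in> cube_vertices k" and y: "y \<in> cube_vertices k"
    and c: "card {i\<in>{1..k}. x i \<noteq> y i} = 1" by (auto simp: cube_edges_def)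
  then obtain i where i: "{i\<in>{1..k}. x i \<noteq> y i} = {i}" by (auto simp: card_1_singleton_iff)
  hence ik: "i \<in> {1..k}" and xyi: "x i \<noteq> y i" by auto
  have "y = flip i x"
  proof
    fix j show "y j = flip i x j"
    proof (cases "j \<in> {1..k}")
      case True
      show ?thesis
      proof (cases "j = i")
        case True thus ?thesis using xyi by simp
      next
        case False thus ?thesis using i \<open>j \<in> {1..k}\<close> by auto
      qed
    next
      case False
      hence "j \<noteq> i" using ik by auto
      thus ?thesis using V_out[OF x False] V_out[OF y False] by simp
    qed
  qed
  thus "x \<in> cube_vertices k \<and> (\<exists>i\<in>{1..k}. y = flip i x)" using x ik by auto
next
  assume "x \<in> cube_vertices k \<and> (\<exists>i\<in>{1..k}. y = flip i x)"
  then obtain i where x: "x \<in> cube_vertices k" and i: "i \<in> {1..k}" and y: "y = flip i x" by auto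
  show "(x, y) \<in> cube_edges k"
    unfolding cube_edges_def using x flip_in[OF x i] diffset_flip[OF i, of x] y by simp
qed

lemma edge_coord_flip: "i \<in> {1..k} \<Longrightarrow> edge_coord k x (flip i x) = i"
  unfolding edge_coord_def by (rule the_equality) (auto simp: flip_def split: if_splits)

lemma edge_weight_flip: "i \<in> {1..k} \<Longrightarrow> edge_weight k yw x (flip i x) = yw i (\<not> x i)"
  by (simp add: edge_weight_def edge_coord_flip)

definition CH :: "nat \<Rightarrow> ((nat \<Rightarrow> bool) \<Rightarrow> nat) set" where
  "CH k = PiE (cube_vertices k) (\<lambda>_. {0..k})"

definition FE :: "nat \<Rightarrow> ((nat \<Rightarrow> bool) \<Rightarrow> nat) \<Rightarrow> ((nat \<Rightarrow> bool) \<times> (nat \<Rightarrow> bool)) set" where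
  "FE k C = (\<lambda>x. (x, flip (C x) x)) ` {x\<in>cube_vertices k. C x \<noteq> 0}"

definition coef :: "'a \<Rightarrow> (nat \<Rightarrow> bool \<Rightarrow> 'a) \<Rightarrow> (nat \<Rightarrow> bool) \<Rightarrow> nat \<Rightarrow> 'a" where
  "coef z yw x c = (if c = 0 then z else yw c (\<not> x c))"

lemma FE_mem: "(x, y) \<in> FE k C \<longleftrightarrow> x \<in> cube_vertices k \<and> C x \<noteq> 0 \<and> y = flip (C x) x"
  unfolding FE_def by auto

lemma CH_range: "C \<in> CH k \<Longrightarrow> x \<in> cube_vertices k \<Longrightarrow> C x \<in> {0..k}"
  unfolding CH_def by auto

lemma FE_forest:
  assumes C: "C \<in> CH k" and ac: "acyclic (FE k C)"
  shows "FE k C \<in> spanning_oriented_forests k"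
  unfolding spanning_oriented_forests_def
proof (intro CollectI conjI ac ballI)
  show "FE k C \<subseteq> cube_edges k"
  proof
    fix e assume "e \<in> FE k C"
    then obtain x where x: "x \<in> cube_vertices k" "C x \<noteq> 0" and e: "e = (x, flip (C x) x)"
      unfolding FE_def by auto
    have "C x \<in> {1..k}" using CH_range[OF C x(1)] x(2) by auto
    thus "e \<in> cube_edges k" using e x edges_iff by blast
  qed
  fix x assume x: "x \<in> cube_vertices k"
  have "{y. (x, y) \<in> FE k C} \<subseteq> {flip (C x) x}" by (auto simp: FE_mem)
  hence "card {y. (x, y) \<in> FE k C} \<le> card {flip (C x) x}" by (intro card_mono) auto
  thus "card {y. (x, y) \<in> FE k C} \<le> 1" by simp
qed

lemma FE_inj: "inj_on (FE k) (CH k)"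
proof (rule inj_onI)
  fix C1 C2 assume C1: "C1 \<in> CH k" and C2: "C2 \<in> CH k" and eq: "FE k C1 = FE k C2"
  show "C1 = C2"
  proof
    fix x show "C1 x = C2 x"
    proof (cases "x \<in> cube_vertices k")
      case False thus ?thesis using C1 C2 unfolding CH_def by (metis PiE_arb)
    next
      case x: True
      show ?thesis
      proof (cases "C1 x = 0")
        case True
        show ?thesis
        proof (rule ccontr)
          assume "C1 x \<noteq> C2 x"
          hence "(x, flip (C2 x) x) \<in> FE k C2" using True x by (simp add: FE_mem)
          hence "(x, flip (C2 x) x) \<in> FE k C1" using eq by simp
          thus False using True by (simp add: FE_mem)
        qed
      next
        case False
        hence "(x, flip (C1 x) x) \<in> FE k C1" using x by (simp add: FE_mem)
        hence "(x, flip (C1 x) x) \<in> FE k C2" using eq by simp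
        hence "flip (C1 x) x = flip (C2 x) x" by (simp add: FE_mem)
        thus ?thesis by (rule flip_inj)
      qed
    qed
  qed
qed

lemma forest_out_unique:
  assumes F: "F \<in> spanning_oriented_forests k" and "(x, y1) \<in> F" "(x, y2) \<in> F"
  shows "y1 = y2"
proof -
  have sub: "F \<subseteq> cube_edges k" and deg: "\<forall>x \<in> cube_vertices k. card {y. (x, y) \<in> F} \<le> 1"
    using F by (auto simp: spanning_oriented_forests_def)
  have x: "x \<in> cube_vertices k" using assms(2) sub edges_iff by blast
  have "{y. (x, y) \<in> F} \<subseteq> cube_vertices k"
    using sub by (auto simp: cube_edges_def)
  hence fin: "finite {y. (x, y) \<in> F}" using finite_V finite_subset by blast
  have "card {y. (x, y) \<in> F} \<le> Suc 0" using deg x by simp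
  thus ?thesis using card_le_Suc0_iff_eq[OF fin] assms(2,3) by blast
qed

lemma FE_surj:
  assumes F: "F \<in> spanning_oriented_forests k"
  shows "\<exists>C\<in>CH k. acyclic (FE k C) \<and> FE k C = F"
proof -
  have sub: "F \<subseteq> cube_edges k" and ac: "acyclic F"
    using F by (auto simp: spanning_oriented_forests_def)
  define C where "C = (\<lambda>x. if x \<in> cube_vertices k then
      (if \<exists>y. (x, y) \<in> F then edge_coord k x (SOME y. (x, y) \<in> F) else 0) else undefined)"
  have key: "C x = i" if xy: "(x, flip i x) \<in> F" and i: "i \<in> {1..k}" for x i
  proof -
    have x: "x \<in> cube_vertices k" using xy sub edges_iff by blast
    have ex: "\<exists>y. (x, y) \<in> F" using xy by blast
    have "(x, SOME y. (x, y) \<in> F) \<in> F" using someI_ex[OF ex] .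
    hence "(SOME y. (x, y) \<in> F) = flip i x" using forest_out_unique[OF F _ xy] by blast
    thus ?thesis unfolding C_def using x ex edge_coord_flip[OF i] by simp
  qed
  have CH: "C \<in> CH k"
    unfolding CH_def
  proof (rule PiE_I)
    fix x assume x: "x \<in> cube_vertices k"
    show "C x \<in> {0..k}"
    proof (cases "\<exists>y. (x, y) \<in> F")
      case True
      then obtain y where "(x, y) \<in> F" by blast
      then obtain i where i: "i \<in> {1..k}" "y = flip i x" using sub edges_iff by blast
      thus ?thesis using key \<open>(x, y) \<in> F\<close> by auto
    next
      case False thus ?thesis unfolding C_def using x by simp
    qed
  next
    fix x assume "x \<notin> cube_vertices k" thus "C x = undefined" unfolding C_def by simp
  qed
  have eq: "FE k C = F"
  proof
    show "FE k C \<subseteq> F"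
    proof
      fix e assume "e \<in> FE k C"
      then obtain x where x: "x \<in> cube_vertices k" "C x \<noteq> 0" and e: "e = (x, flip (C x) x)"
        unfolding FE_def by auto
      have ex: "\<exists>y. (x, y) \<in> F" using x unfolding C_def by (auto split: if_splits)
      then obtain y where y: "(x, y) \<in> F" by blast
      then obtain i where i: "i \<in> {1..k}" "y = flip i x" using sub edges_iff by blast
      have "C x = i" using key y i by simp
      thus "e \<in> F" using e y i by simp
    qed
  next
    show "F \<subseteq> FE k C"
    proof
      fix e assume e: "e \<in> F"
      then obtain x y where xy: "e = (x, y)" by (cases e)
      hence "(x, y) \<in> cube_edges k" using e sub by auto
      then obtain i where x: "x \<in> cube_vertices k" and i: "i \<in> {1..k}" "y = flip i x"
        using edges_iff by blast
      have "C x = i" using key e xy i by simp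
      thus "e \<in> FE k C" using xy x i by (auto simp: FE_mem)
    qed
  qed
  show ?thesis using CH eq ac by auto
qed

lemma FE_weight:
  fixes z :: "'a::comm_ring_1"
  assumes C: "C \<in> CH k"
  shows "forest_weight k z yw (FE k C) = (\<Prod>x\<in>cube_vertices k. coef z yw x (C x))"
proof -
  let ?V = "cube_vertices k"
  have roots: "forest_roots k (FE k C) = {x\<in>?V. C x = 0}"
    unfolding forest_roots_def by (auto simp: FE_mem)
  have inj: "inj_on (\<lambda>x. (x, flip (C x) x)) {x\<in>?V. C x \<noteq> 0}" by (rule inj_onI) auto
  have "(\<Prod>(x, y)\<in>FE k C. edge_weight k yw x y)
      = (\<Prod>x\<in>{x\<in>?V. C x \<noteq> 0}. edge_weight k yw x (flip (C x) x))"
    unfolding FE_def by (subst prod.reindex[OF inj]) simp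
  also have "\<dots> = (\<Prod>x\<in>{x\<in>?V. C x \<noteq> 0}. coef z yw x (C x))"
  proof (intro prod.cong refl)
    fix x assume "x \<in> {x\<in>?V. C x \<noteq> 0}"
    hence "C x \<in> {1..k}" using CH_range[OF C] by fastforce
    thus "edge_weight k yw x (flip (C x) x) = coef z yw x (C x)"
      using \<open>x \<in> {x\<in>?V. C x \<noteq> 0}\<close> by (simp add: edge_weight_flip coef_def)
  qed
  finally have E: "(\<Prod>(x, y)\<in>FE k C. edge_weight k yw x y) = (\<Prod>x\<in>{x\<in>?V. C x \<noteq> 0}. coef z yw x (C x))" .
  have Z: "z ^ card {x\<in>?V. C x = 0} = (\<Prod>x\<in>{x\<in>?V. C x = 0}. coef z yw x (C x))"
    by (simp add: coef_def)
  have "(\<Prod>x\<in>?V. coef z yw x (C x)) = (\<Prod>x\<in>{x\<in>?V. C x = 0} \<union> {x\<in>?V. C x \<noteq> 0}. coef z yw x (C x))"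
    by (rule prod.cong) auto
  also have "\<dots> = (\<Prod>x\<in>{x\<in>?V. C x = 0}. coef z yw x (C x)) * (\<Prod>x\<in>{x\<in>?V. C x \<noteq> 0}. coef z yw x (C x))"
    by (rule prod.union_disjoint) (use finite_V[of k] in auto)
  finally have "(\<Prod>x\<in>?V. coef z yw x (C x)) = (\<Prod>x\<in>{x\<in>?V. C x = 0}. coef z yw x (C x)) * (\<Prod>x\<in>{x\<in>?V. C x \<noteq> 0}. coef z yw x (C x))" .
  thus ?thesis unfolding forest_weight_def roots E Z by simp
qed

lemma forest_sum:
  fixes z :: "'a::comm_ring_1"
  shows "(\<Sum>F \<in> spanning_oriented_forests k. forest_weight k z yw F)
      = (\<Sum>C\<in>CH k. if acyclic (FE k C) then (\<Prod>x\<in>cube_vertices k. coef z yw x (C x)) else 0)"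
proof -
  let ?A = "{C\<in>CH k. acyclic (FE k C)}"
  have bij: "bij_betw (FE k) ?A (spanning_oriented_forests k)"
    unfolding bij_betw_def
  proof
    show "inj_on (FE k) ?A" using FE_inj by (rule inj_on_subset) auto
    show "FE k ` ?A = spanning_oriented_forests k"
    proof
      show "FE k ` ?A \<subseteq> spanning_oriented_forests k" using FE_forest by blast
      show "spanning_oriented_forests k \<subseteq> FE k ` ?A"
      proof
        fix F assume "F \<in> spanning_oriented_forests k"
        then obtain C where "C \<in> CH k" "acyclic (FE k C)" "FE k C = F" using FE_surj by blast
        thus "F \<in> FE k ` ?A" by blast
      qed
    qed
  qed
  have finCH: "finite (CH k)" unfolding CH_def by (intro finite_PiE finite_V) auto
  have "(\<Sum>F \<in> spanning_oriented_forests k. forest_weight k z yw F) = (\<Sum>C\<in>?A. forest_weight k z yw (FE k C))"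
    by (rule sum.reindex_bij_betw[OF bij, symmetric])
  also have "\<dots> = (\<Sum>C\<in>?A. \<Prod>x\<in>cube_vertices k. coef z yw x (C x))"
    by (intro sum.cong refl FE_weight) auto
  also have "\<dots> = (\<Sum>C\<in>CH k. if acyclic (FE k C) then (\<Prod>x\<in>cube_vertices k. coef z yw x (C x)) else 0)"
    using finCH by (simp add: sum.inter_filter)
  finally show ?thesis .
qed



definition Grow :: "(nat \<Rightarrow> bool) \<Rightarrow> nat \<Rightarrow> (nat \<Rightarrow> bool) \<Rightarrow> 'a::comm_ring_1" where
  "Grow x c w = (if w = x then 1 else 0) - (if c \<noteq> 0 \<and> w = flip c x then 1 else 0)"

definition Amat :: "nat \<Rightarrow> 'a::comm_ring_1 \<Rightarrow> (nat \<Rightarrow> bool \<Rightarrow> 'a) \<Rightarrow> (nat \<Rightarrow> bool) \<Rightarrow> (nat \<Rightarrow> bool) \<Rightarrow> 'a" where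
  "Amat k z yw x w = (\<Sum>c\<in>{0..k}. coef z yw x c * Grow x c w)"

lemma finite_CH: "finite (CH k)" unfolding CH_def by (intro finite_PiE finite_V) auto

lemma det_expand:
  fixes z :: "'a::comm_ring_1"
  shows "detV (cube_vertices k) (Amat k z yw)
     = (\<Sum>C\<in>CH k. (\<Prod>x\<in>cube_vertices k. coef z yw x (C x)) * detV (cube_vertices k) (\<lambda>x w. Grow x (C x) w :: 'a))"
proof -
  let ?V = "cube_vertices k"
  let ?P = "{p. p permutes ?V}"
  have "detV ?V (Amat k z yw) = (\<Sum>p\<in>?P. of_int (sign p) * (\<Prod>x\<in>?V. \<Sum>c\<in>{0..k}. coef z yw x c * Grow x c (p x)))"
    unfolding detV_def Amat_def ..
  also have "\<dots> = (\<Sum>p\<in>?P. of_int (sign p) * (\<Sum>C\<in>CH k. \<Prod>x\<in>?V. coef z yw x (C x) * Grow x (C x) (p x)))"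
    unfolding CH_def by (subst prod_sum_PiE) (auto simp: finite_V)
  also have "\<dots> = (\<Sum>p\<in>?P. \<Sum>C\<in>CH k. (\<Prod>x\<in>?V. coef z yw x (C x)) * (of_int (sign p) * (\<Prod>x\<in>?V. Grow x (C x) (p x))))"
    by (simp add: sum_distrib_left prod.distrib mult.left_commute)
  also have "\<dots> = (\<Sum>C\<in>CH k. \<Sum>p\<in>?P. (\<Prod>x\<in>?V. coef z yw x (C x)) * (of_int (sign p) * (\<Prod>x\<in>?V. Grow x (C x) (p x))))"
    by (rule sum.swap)
  also have "\<dots> = (\<Sum>C\<in>CH k. (\<Prod>x\<in>?V. coef z yw x (C x)) * detV ?V (\<lambda>x w. Grow x (C x) w :: 'a))"
    unfolding detV_def by (simp add: sum_distrib_left)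
  finally show ?thesis .
qed

lemma Grow_diag[simp]: "Grow x c x = 1"
  by (simp add: Grow_def) (metis flip_neq)

lemma Grow_off: "w \<noteq> x \<Longrightarrow> (Grow x c w :: 'a::comm_ring_1) \<noteq> 0 \<Longrightarrow> c \<noteq> 0 \<and> w = flip c x"
  by (auto simp: Grow_def split: if_splits)

lemma finite_FE: "finite (FE k C)"
  unfolding FE_def using finite_V by auto

lemma det_acyclic:
  assumes C: "C \<in> CH k" and ac: "acyclic (FE k C)"
  shows "detV (cube_vertices k) (\<lambda>x w. Grow x (C x) w :: 'a::comm_ring_1) = 1"
proof -
  let ?V = "cube_vertices k"
  let ?R = "FE k C"
  have "detV ?V (\<lambda>x w. Grow x (C x) w :: 'a) = (\<Prod>x\<in>?V. Grow x (C x) x)"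
  proof (rule detV_diag_only[OF finite_V])
    fix p assume p: "p permutes ?V" and pid: "p \<noteq> id"
    show "\<exists>x\<in>?V. (Grow x (C x) (p x) :: 'a) = 0"
    proof (rule ccontr)
      assume "\<not> ?thesis"
      hence nz: "\<And>x. x \<in> ?V \<Longrightarrow> (Grow x (C x) (p x) :: 'a) \<noteq> 0" by blast
      have edge: "(y, p y) \<in> ?R" if "y \<in> ?V" "p y \<noteq> y" for y
        using Grow_off[OF that(2) nz[OF that(1)]] that(1) by (simp add: FE_mem)
      obtain x0 where x0: "p x0 \<noteq> x0" using pid by (auto simp: fun_eq_iff)
      hence x0V: "x0 \<in> ?V" using p by (meson permutes_not_in)
      define f where "f = (\<lambda>n. (p ^^ n) x0)"
      have fV: "f n \<in> ?V" for n
        by (induction n) (auto simp: f_def x0V permutes_in_image[OF p])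
      have fne: "f (Suc n) \<noteq> f n" for n
      proof (induction n)
        case 0 thus ?case using x0 by (simp add: f_def)
      next
        case (Suc n)
        have "f (Suc (Suc n)) = p (f (Suc n))" "f (Suc n) = p (f n)" by (simp_all add: f_def)
        thus ?case using Suc permutes_inj[OF p] by (metis injD)
      qed
      have chain: "(f (Suc n), f n) \<in> ?R\<inverse>" for n
        using edge[OF fV[of n]] fne[of n] by (simp add: f_def)
      have "wf (?R\<inverse>)"
        by (rule finite_acyclic_wf) (simp_all add: finite_FE ac acyclic_converse)
      thus False using chain unfolding wf_iff_no_infinite_down_chain by blast
    qed
  qed
  also have "\<dots> = 1" by simp
  finally show ?thesis .
qed

lemma FE_trancl_chain:
  assumes "(a, b) \<in> (FE k C)\<^sup>+"
  shows "\<exists>m>0. b = ((\<lambda>y. flip (C y) y) ^^ m) a \<and>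
      (\<forall>j<m. ((\<lambda>y. flip (C y) y) ^^ j) a \<in> cube_vertices k \<and> C (((\<lambda>y. flip (C y) y) ^^ j) a) \<noteq> 0)"
  using assms
proof (induction rule: trancl_induct)
  case (base y)
  thus ?case by (intro exI[of _ 1]) (auto simp: FE_mem)
next
  case (step y z)
  let ?s = "\<lambda>y. flip (C y) y"
  from step.IH obtain m where m: "m > 0" "y = (?s ^^ m) a"
    "\<forall>j<m. (?s ^^ j) a \<in> cube_vertices k \<and> C ((?s ^^ j) a) \<noteq> 0" by blast
  have yz: "y \<in> cube_vertices k" "C y \<noteq> 0" "z = ?s y" using step.hyps(2) by (auto simp: FE_mem)
  show ?case
  proof (intro exI[of _ "Suc m"] conjI)
    show "z = (?s ^^ Suc m) a" using yz m by simp
    show "\<forall>j<Suc m. (?s ^^ j) a \<in> cube_vertices k \<and> C ((?s ^^ j) a) \<noteq> 0"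
    proof (intro allI impI)
      fix j assume "j < Suc m"
      thus "(?s ^^ j) a \<in> cube_vertices k \<and> C ((?s ^^ j) a) \<noteq> 0"
        using m yz by (cases "j = m") auto
    qed
  qed simp
qed

lemma det_cyclic:
  assumes C: "C \<in> CH k" and nac: "\<not> acyclic (FE k C)"
  shows "detV (cube_vertices k) (\<lambda>x w. Grow x (C x) w :: 'a::comm_ring_1) = 0"
proof -
  let ?V = "cube_vertices k"
  let ?s = "\<lambda>y. flip (C y) y"
  obtain x where "(x, x) \<in> (FE k C)\<^sup>+" using nac unfolding acyclic_def by blast
  then obtain m where m: "m > 0" "x = (?s ^^ m) x"
    and mj: "\<And>j. j < m \<Longrightarrow> (?s ^^ j) x \<in> ?V \<and> C ((?s ^^ j) x) \<noteq> 0"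
    using FE_trancl_chain by blast
  define S where "S = (\<lambda>j. (?s ^^ j) x) ` {..<m}"
  have finS: "finite S" unfolding S_def by simp
  have SV: "S \<subseteq> ?V" using mj unfolding S_def by auto
  have SC: "\<And>y. y \<in> S \<Longrightarrow> C y \<noteq> 0" using mj unfolding S_def by auto
  have xS: "x \<in> S" unfolding S_def using m(1) by (auto intro: image_eqI[of _ _ 0])
  have sS: "?s ` S = S"
  proof
    show "?s ` S \<subseteq> S"
    proof
      fix u assume "u \<in> ?s ` S"
      then obtain j where j: "j < m" "u = ?s ((?s ^^ j) x)" unfolding S_def by auto
      hence u: "u = (?s ^^ Suc j) x" by simp
      show "u \<in> S"
      proof (cases "Suc j = m")
        case True thus ?thesis using u m(2) xS by simp
      next
        case False
        hence "Suc j < m" using j by simp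
        thus ?thesis using u unfolding S_def by blast
      qed
    qed
    show "S \<subseteq> ?s ` S"
    proof
      fix u assume "u \<in> S"
      then obtain j where j: "j < m" "u = (?s ^^ j) x" unfolding S_def by auto
      show "u \<in> ?s ` S"
      proof (cases j)
        case 0
        obtain m' where m': "m = Suc m'" using m(1) by (cases m) auto
        have "u = ?s ((?s ^^ m') x)" using j 0 m(2) m' by simp
        moreover have "(?s ^^ m') x \<in> S" unfolding S_def using m' by auto
        ultimately show ?thesis by blast
      next
        case (Suc i)
        hence "u = ?s ((?s ^^ i) x)" using j by simp
        moreover have "(?s ^^ i) x \<in> S" unfolding S_def using j Suc by auto
        ultimately show ?thesis by blast
      qed
    qed
  qed
  have injS: "inj_on ?s S" using sS by (intro eq_card_imp_inj_on[OF finS]) simp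
  show ?thesis
  proof (rule detV_kernel[OF finite_V, where ?x0.0=x and v="\<lambda>y. if y \<in> S then 1 else 0"])
    show "x \<in> ?V" using xS SV by auto
    show "(if x \<in> S then 1 else 0) = (1::'a)" using xS by simp
    fix w assume w: "w \<in> ?V"
    have "(\<Sum>y\<in>?V. (if y \<in> S then 1 else 0) * (Grow y (C y) w :: 'a)) = (\<Sum>y\<in>S. Grow y (C y) w)"
      using SV finite_V[of k] by (simp add: sum.inter_restrict[symmetric] Int_absorb1 if_distrib[of "\<lambda>t. t * _"] cong: if_cong)
    also have "\<dots> = (\<Sum>y\<in>S. (if w = y then 1 else 0)) - (\<Sum>y\<in>S. (if w = ?s y then 1 else 0))"
      using SC by (simp add: Grow_def sum_subtractf)
    also have "(\<Sum>y\<in>S. (if w = ?s y then (1::'a) else 0)) = (\<Sum>u\<in>?s ` S. (if w = u then 1 else 0))"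
      by (rule sum.reindex[OF injS, symmetric, unfolded o_def])
    also have "\<dots> = (\<Sum>y\<in>S. (if w = y then 1 else 0))" using sS by simp
    finally show "(\<Sum>y\<in>?V. (if y \<in> S then 1 else 0) * (Grow y (C y) w :: 'a)) = 0" by simp
  qed
qed

lemma forest_det:
  fixes z :: "'a::comm_ring_1"
  shows "(\<Sum>F \<in> spanning_oriented_forests k. forest_weight k z yw F) = detV (cube_vertices k) (Amat k z yw)"
  unfolding forest_sum det_expand
  by (intro sum.cong refl) (auto simp: det_acyclic det_cyclic)



definition Qm :: "nat \<Rightarrow> (nat \<Rightarrow> bool) \<Rightarrow> (nat \<Rightarrow> bool) \<Rightarrow> 'a::comm_ring_1" where
  "Qm k x y = (if \<forall>i\<in>{1..k}. y i \<longrightarrow> x i then 1 else 0)"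

definition Ti :: "(nat \<Rightarrow> bool \<Rightarrow> 'a::comm_ring_1) \<Rightarrow> nat \<Rightarrow> bool \<Rightarrow> bool \<Rightarrow> 'a" where
  "Ti yw i u v = (if v then (if u then yw i False + yw i True else - yw i True) else 0)"

definition Bm :: "nat \<Rightarrow> 'a::comm_ring_1 \<Rightarrow> (nat \<Rightarrow> bool \<Rightarrow> 'a) \<Rightarrow> (nat \<Rightarrow> bool) \<Rightarrow> (nat \<Rightarrow> bool) \<Rightarrow> 'a" where
  "Bm k z yw x y = (if x = y then z else 0) +
     (\<Sum>i\<in>{1..k}. if (\<forall>j\<in>{1..k}. j \<noteq> i \<longrightarrow> x j = y j) then Ti yw i (x i) (y i) else 0)"

lemma A_explicit:
  "Amat k z yw x w = (if w = x then z else 0) +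
     (\<Sum>i\<in>{1..k}. yw i (\<not> x i) * ((if w = x then 1 else 0) - (if w = flip i x then 1 else 0)))"
proof -
  have "{0..k} = insert 0 {1..k}" by auto
  hence "Amat k z yw x w = coef z yw x 0 * Grow x 0 w + (\<Sum>c\<in>{1..k}. coef z yw x c * Grow x c w)"
    unfolding Amat_def by simp
  also have "(\<Sum>c\<in>{1..k}. coef z yw x c * Grow x c w) =
      (\<Sum>i\<in>{1..k}. yw i (\<not> x i) * ((if w = x then 1 else 0) - (if w = flip i x then 1 else 0)))"
    by (intro sum.cong refl) (auto simp: coef_def Grow_def)
  finally show ?thesis by (simp add: coef_def Grow_def)
qed

lemma V_eq: "x \<in> cube_vertices k \<Longrightarrow> w \<in> cube_vertices k \<Longrightarrow> (\<And>i. i \<in> {1..k} \<Longrightarrow> x i = w i) \<Longrightarrow> x = w"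
  by (rule ext) (metis V_out)

lemma upd_in: "y \<in> cube_vertices k \<Longrightarrow> i \<in> {1..k} \<Longrightarrow> y(i := b) \<in> cube_vertices k"
  unfolding cube_vertices_def by (auto simp: PiE_iff extensional_def)

lemma agree_set:
  assumes y: "y \<in> cube_vertices k" and i: "i \<in> {1..k}"
  shows "{w\<in>cube_vertices k. \<forall>j\<in>{1..k}. j \<noteq> i \<longrightarrow> w j = y j} = {y(i := False), y(i := True)}"
proof
  show "{w\<in>cube_vertices k. \<forall>j\<in>{1..k}. j \<noteq> i \<longrightarrow> w j = y j} \<subseteq> {y(i := False), y(i := True)}"
  proof
    fix w assume w: "w \<in> {w\<in>cube_vertices k. \<forall>j\<in>{1..k}. j \<noteq> i \<longrightarrow> w j = y j}"
    have "w = y(i := w i)"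
      using w upd_in[OF y i, of "w i"] by (intro V_eq[of _ k]) auto
    thus "w \<in> {y(i := False), y(i := True)}" by (cases "w i") auto
  qed
  show "{y(i := False), y(i := True)} \<subseteq> {w\<in>cube_vertices k. \<forall>j\<in>{1..k}. j \<noteq> i \<longrightarrow> w j = y j}"
    using upd_in[OF y i] by auto
qed

lemma Q_eqs:
  assumes i: "i \<in> {1..k}"
  shows "Qm k x y = (if (\<forall>j\<in>{1..k}. j \<noteq> i \<longrightarrow> y j \<longrightarrow> x j) \<and> (y i \<longrightarrow> x i) then 1 else 0)"
    and "Qm k (flip i x) y = (if (\<forall>j\<in>{1..k}. j \<noteq> i \<longrightarrow> y j \<longrightarrow> x j) \<and> (y i \<longrightarrow> \<not> x i) then 1 else 0)"
    and "Qm k x (y(i := False)) = (if (\<forall>j\<in>{1..k}. j \<noteq> i \<longrightarrow> y j \<longrightarrow> x j) then 1 else 0)"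
    and "Qm k x (y(i := True)) = (if (\<forall>j\<in>{1..k}. j \<noteq> i \<longrightarrow> y j \<longrightarrow> x j) \<and> x i then 1 else 0)"
proof -
  let ?P = "\<forall>j\<in>{1..k}. j \<noteq> i \<longrightarrow> y j \<longrightarrow> x j"
  have 1: "(\<forall>j\<in>{1..k}. y j \<longrightarrow> x j) \<longleftrightarrow> ?P \<and> (y i \<longrightarrow> x i)" using i by auto
  have 2: "(\<forall>j\<in>{1..k}. y j \<longrightarrow> flip i x j) \<longleftrightarrow> ?P \<and> (y i \<longrightarrow> \<not> x i)" using i
    by (metis flip_at flip_other)
  have 3: "(\<forall>j\<in>{1..k}. (y(i := False)) j \<longrightarrow> x j) \<longleftrightarrow> ?P" by auto
  have 4: "(\<forall>j\<in>{1..k}. (y(i := True)) j \<longrightarrow> x j) \<longleftrightarrow> ?P \<and> x i" using i by auto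
  show "Qm k x y = (if ?P \<and> (y i \<longrightarrow> x i) then 1 else 0)" unfolding Qm_def 1 ..
  show "Qm k (flip i x) y = (if ?P \<and> (y i \<longrightarrow> \<not> x i) then 1 else 0)" unfolding Qm_def 2 ..
  show "Qm k x (y(i := False)) = (if ?P then 1 else 0)" unfolding Qm_def 3 ..
  show "Qm k x (y(i := True)) = (if ?P \<and> x i then 1 else 0)" unfolding Qm_def 4 ..
qed

lemma per_coord:
  fixes yw :: "nat \<Rightarrow> bool \<Rightarrow> 'a::comm_ring_1"
  assumes i: "i \<in> {1..k}"
  shows "yw i (\<not> x i) * (Qm k x y - Qm k (flip i x) y)
       = Qm k x (y(i := False)) * Ti yw i False (y i) + Qm k x (y(i := True)) * Ti yw i True (y i)"
  unfolding Q_eqs[OF i]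
  by (cases "\<forall>j\<in>{1..k}. j \<noteq> i \<longrightarrow> y j \<longrightarrow> x j"; cases "x i"; cases "y i") (simp_all add: Ti_def algebra_simps)

lemma AQ_eq_QB:
  fixes z :: "'a::comm_ring_1"
  assumes x: "x \<in> cube_vertices k" and y: "y \<in> cube_vertices k"
  shows "mulV (cube_vertices k) (Amat k z yw) (Qm k) x y = mulV (cube_vertices k) (Qm k) (Bm k z yw) x y"
proof -
  let ?V = "cube_vertices k"
  have fin: "finite ?V" by (rule finite_V)
  have L: "mulV ?V (Amat k z yw) (Qm k) x y =
      z * Qm k x y + (\<Sum>i\<in>{1..k}. yw i (\<not> x i) * (Qm k x y - Qm k (flip i x) y))"
  proof -
    have "mulV ?V (Amat k z yw) (Qm k) x y = (\<Sum>w\<in>?V. (if w = x then z else 0) * Qm k w y) +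
       (\<Sum>w\<in>?V. \<Sum>i\<in>{1..k}. yw i (\<not> x i) * ((if w = x then 1 else 0) - (if w = flip i x then 1 else 0)) * Qm k w y)"
      unfolding mulV_def A_explicit by (simp add: distrib_right sum.distrib sum_distrib_right)
    also have "(\<Sum>w\<in>?V. (if w = x then z else 0) * Qm k w y) = z * Qm k x y"
      using x fin by (simp add: if_distrib[of "\<lambda>t. t * _"] cong: if_cong)
    also have "(\<Sum>w\<in>?V. \<Sum>i\<in>{1..k}. yw i (\<not> x i) * ((if w = x then 1 else 0) - (if w = flip i x then 1 else 0)) * Qm k w y)
       = (\<Sum>i\<in>{1..k}. \<Sum>w\<in>?V. yw i (\<not> x i) * ((if w = x then 1 else 0) - (if w = flip i x then 1 else 0)) * Qm k w y)"
      by (rule sum.swap)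
    also have "\<dots> = (\<Sum>i\<in>{1..k}. yw i (\<not> x i) * (Qm k x y - Qm k (flip i x) y))"
    proof (intro sum.cong refl)
      fix i assume i: "i \<in> {1..k}"
      have fx: "flip i x \<in> ?V" by (rule flip_in[OF x i])
      have "(\<Sum>w\<in>?V. yw i (\<not> x i) * ((if w = x then 1 else 0) - (if w = flip i x then 1 else 0)) * Qm k w y)
          = (\<Sum>w\<in>?V. yw i (\<not> x i) * ((if w = x then Qm k w y else 0) - (if w = flip i x then Qm k w y else 0)))"
        by (intro sum.cong refl) (simp add: algebra_simps)
      also have "\<dots> = yw i (\<not> x i) * ((\<Sum>w\<in>?V. if w = x then Qm k w y else 0) - (\<Sum>w\<in>?V. if w = flip i x then Qm k w y else 0))"
        by (simp add: sum_distrib_left sum_subtractf right_diff_distrib)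
      also have "\<dots> = yw i (\<not> x i) * (Qm k x y - Qm k (flip i x) y)"
        using fin x fx by simp
      finally show "(\<Sum>w\<in>?V. yw i (\<not> x i) * ((if w = x then 1 else 0) - (if w = flip i x then 1 else 0)) * Qm k w y)
          = yw i (\<not> x i) * (Qm k x y - Qm k (flip i x) y)" .
    qed
    finally show ?thesis .
  qed
  have R: "mulV ?V (Qm k) (Bm k z yw) x y =
      z * Qm k x y + (\<Sum>i\<in>{1..k}. Qm k x (y(i := False)) * Ti yw i False (y i) + Qm k x (y(i := True)) * Ti yw i True (y i))"
  proof -
    have "mulV ?V (Qm k) (Bm k z yw) x y = (\<Sum>w\<in>?V. Qm k x w * (if w = y then z else 0)) +
       (\<Sum>w\<in>?V. \<Sum>i\<in>{1..k}. Qm k x w * (if (\<forall>j\<in>{1..k}. j \<noteq> i \<longrightarrow> w j = y j) then Ti yw i (w i) (y i) else 0))"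
      unfolding mulV_def Bm_def by (simp add: distrib_left sum.distrib sum_distrib_left)
    also have "(\<Sum>w\<in>?V. Qm k x w * (if w = y then z else 0)) = z * Qm k x y"
      using y fin by (simp add: if_distrib[of "\<lambda>t. _ * t"] mult.commute cong: if_cong)
    also have "(\<Sum>w\<in>?V. \<Sum>i\<in>{1..k}. Qm k x w * (if (\<forall>j\<in>{1..k}. j \<noteq> i \<longrightarrow> w j = y j) then Ti yw i (w i) (y i) else 0))
       = (\<Sum>i\<in>{1..k}. \<Sum>w\<in>?V. Qm k x w * (if (\<forall>j\<in>{1..k}. j \<noteq> i \<longrightarrow> w j = y j) then Ti yw i (w i) (y i) else 0))"
      by (rule sum.swap)
    also have "\<dots> = (\<Sum>i\<in>{1..k}. Qm k x (y(i := False)) * Ti yw i False (y i) + Qm k x (y(i := True)) * Ti yw i True (y i))"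
    proof (intro sum.cong refl)
      fix i assume i: "i \<in> {1..k}"
      have "(\<Sum>w\<in>?V. Qm k x w * (if (\<forall>j\<in>{1..k}. j \<noteq> i \<longrightarrow> w j = y j) then Ti yw i (w i) (y i) else 0))
          = (\<Sum>w\<in>?V. if (\<forall>j\<in>{1..k}. j \<noteq> i \<longrightarrow> w j = y j) then Qm k x w * Ti yw i (w i) (y i) else 0)"
        by (intro sum.cong refl) (simp only: if_distrib[of "\<lambda>t. Qm k x _ * t"] mult_zero_right)
      also have "\<dots> = (\<Sum>w\<in>{w\<in>?V. \<forall>j\<in>{1..k}. j \<noteq> i \<longrightarrow> w j = y j}. Qm k x w * Ti yw i (w i) (y i))"
        using fin by (simp add: sum.inter_filter)
      also have "\<dots> = (\<Sum>w\<in>{y(i := False), y(i := True)}. Qm k x w * Ti yw i (w i) (y i))"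
        unfolding agree_set[OF y i] ..
      also have "\<dots> = Qm k x (y(i := False)) * Ti yw i False (y i) + Qm k x (y(i := True)) * Ti yw i True (y i)"
      proof -
        have "y(i := False) \<noteq> y(i := True)" by (metis fun_upd_same)
        thus ?thesis by simp
      qed
      finally show "(\<Sum>w\<in>?V. Qm k x w * (if (\<forall>j\<in>{1..k}. j \<noteq> i \<longrightarrow> w j = y j) then Ti yw i (w i) (y i) else 0))
          = Qm k x (y(i := False)) * Ti yw i False (y i) + Qm k x (y(i := True)) * Ti yw i True (y i)" .
    qed
    finally show ?thesis .
  qed
  show ?thesis unfolding L R using per_coord by (metis (no_types, lifting) sum.cong)
qed



lemma V_diff: "x \<in> cube_vertices k \<Longrightarrow> w \<in> cube_vertices k \<Longrightarrow> x \<noteq> w \<Longrightarrow> \<exists>i\<in>{1..k}. x i \<noteq> w i"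
  using V_eq by blast

lemma detQ: "detV (cube_vertices k) (Qm k :: _ \<Rightarrow> _ \<Rightarrow> 'a::comm_ring_1) = 1"
proof -
  have "detV (cube_vertices k) (Qm k :: _ \<Rightarrow> _ \<Rightarrow> 'a) = (\<Prod>x\<in>cube_vertices k. Qm k x x)"
  proof (rule detV_triangular[OF finite_V, where h="\<lambda>x. - int (card {i\<in>{1..k}. x i})"])
    fix x w assume x: "x \<in> cube_vertices k" and w: "w \<in> cube_vertices k" and xw: "x \<noteq> w"
      and nz: "(Qm k x w :: 'a) \<noteq> 0"
    have sub: "\<forall>i\<in>{1..k}. w i \<longrightarrow> x i" using nz by (auto simp: Qm_def split: if_splits)
    obtain i where i: "i \<in> {1..k}" "x i \<noteq> w i" using V_diff[OF x w xw] by blast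
    have "{i\<in>{1..k}. w i} \<subset> {i\<in>{1..k}. x i}" using sub i by auto
    hence "card {i\<in>{1..k}. w i} < card {i\<in>{1..k}. x i}" by (intro psubset_card_mono) auto
    thus "- int (card {i\<in>{1..k}. x i}) < - int (card {i\<in>{1..k}. w i})" by simp
  qed
  also have "\<dots> = 1" by (simp add: Qm_def)
  finally show ?thesis .
qed

lemma detB: "detV (cube_vertices k) (Bm k z yw) = (\<Prod>x\<in>cube_vertices k. Bm k z yw x x)"
proof (rule detV_triangular[OF finite_V, where h="\<lambda>x. int (card {i\<in>{1..k}. x i})"])
  fix x w assume x: "x \<in> cube_vertices k" and w: "w \<in> cube_vertices k" and xw: "x \<noteq> w"
    and nz: "Bm k z yw x w \<noteq> 0"
  have nz2: "(\<Sum>i\<in>{1..k}. if (\<forall>j\<in>{1..k}. j \<noteq> i \<longrightarrow> x j = w j) then Ti yw i (x i) (w i) else 0) \<noteq> 0"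
    using nz xw unfolding Bm_def by simp
  obtain i where i: "i \<in> {1..k}"
    and ne: "(if (\<forall>j\<in>{1..k}. j \<noteq> i \<longrightarrow> x j = w j) then Ti yw i (x i) (w i) else 0) \<noteq> 0"
    using sum.not_neutral_contains_not_neutral[OF nz2] by blast
  have agree: "\<forall>j\<in>{1..k}. j \<noteq> i \<longrightarrow> x j = w j"
  proof (rule ccontr)
    assume a: "\<not> (\<forall>j\<in>{1..k}. j \<noteq> i \<longrightarrow> x j = w j)"
    have "(if (\<forall>j\<in>{1..k}. j \<noteq> i \<longrightarrow> x j = w j) then Ti yw i (x i) (w i) else 0) = 0"
      using a by (rule if_not_P)
    with ne show False by contradiction
  qed
  have T: "Ti yw i (x i) (w i) \<noteq> 0" using ne agree by simp
  have wi: "w i" using T by (auto simp: Ti_def split: if_splits)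
  have "x i \<noteq> w i"
  proof
    assume "x i = w i"
    hence "x = w" using agree by (intro V_eq[OF x w]) auto
    thus False using xw by simp
  qed
  hence xi: "\<not> x i" using wi by simp
  have "{i\<in>{1..k}. x i} \<subset> {i\<in>{1..k}. w i}" using agree i wi xi by auto
  hence "card {i\<in>{1..k}. x i} < card {i\<in>{1..k}. w i}" by (intro psubset_card_mono) auto
  thus "int (card {i\<in>{1..k}. x i}) < int (card {i\<in>{1..k}. w i})" by simp
qed

lemma Bdiag: "Bm k z yw x x = z + (\<Sum>i\<in>{i\<in>{1..k}. x i}. yw i False + yw i True)"
proof -
  have "Bm k z yw x x = z + (\<Sum>i\<in>{1..k}. if x i then yw i False + yw i True else 0)"
    unfolding Bm_def by (auto simp: Ti_def intro!: sum.cong)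
  also have "(\<Sum>i\<in>{1..k}. if x i then yw i False + yw i True else 0) = (\<Sum>i\<in>{i\<in>{1..k}. x i}. yw i False + yw i True)"
    by (rule sum.inter_filter[symmetric]) simp
  finally show ?thesis .
qed

lemma prod_V_Pow:
  "(\<Prod>x\<in>cube_vertices k. f {i\<in>{1..k}. x i}) = (\<Prod>J\<in>Pow {1..k}. (f J :: 'a::comm_monoid_mult))"
proof (rule prod.reindex_bij_betw)
  show "bij_betw (\<lambda>x. {i\<in>{1..k}. x i}) (cube_vertices k) (Pow {1..k})"
  proof (rule bij_betw_byWitness[where f'="\<lambda>J i. if i \<in> {1..k} then i \<in> J else undefined"])
    show "\<forall>x\<in>cube_vertices k. (\<lambda>i. if i \<in> {1..k} then i \<in> {i\<in>{1..k}. x i} else undefined) = x"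
    proof
      fix x assume x: "x \<in> cube_vertices k"
      show "(\<lambda>i. if i \<in> {1..k} then i \<in> {i\<in>{1..k}. x i} else undefined) = x"
        using V_out[OF x] by (auto simp: fun_eq_iff)
    qed
    show "\<forall>J\<in>Pow {1..k}. {i\<in>{1..k}. (if i \<in> {1..k} then i \<in> J else undefined)} = J" by auto
    show "(\<lambda>x. {i\<in>{1..k}. x i}) ` cube_vertices k \<subseteq> Pow {1..k}" by auto
    show "(\<lambda>J i. if i \<in> {1..k} then i \<in> J else undefined) ` Pow {1..k} \<subseteq> cube_vertices k"
      by (auto simp: cube_vertices_def PiE_iff extensional_def)
  qed
qed

theorem corollary6p1:
  fixes k :: nat and z :: "'a::comm_ring_1" and yw :: "nat \<Rightarrow> bool \<Rightarrow> 'a"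
  assumes "k \<ge> 1"
  shows "(\<Sum>F \<in> spanning_oriented_forests k. forest_weight k z yw F)
       = (\<Prod>J \<in> Pow {1..k}. z + (\<Sum>i \<in> J. yw i False + yw i True))"
proof -
  let ?V = "cube_vertices k"
  have "(\<Sum>F \<in> spanning_oriented_forests k. forest_weight k z yw F) = detV ?V (Amat k z yw)"
    by (rule forest_det)
  also have "\<dots> = detV ?V (Amat k z yw) * detV ?V (Qm k :: _ \<Rightarrow> _ \<Rightarrow> 'a)" by (simp add: detQ)
  also have "\<dots> = detV ?V (mulV ?V (Amat k z yw) (Qm k))" by (rule detV_mult[OF finite_V, symmetric])
  also have "\<dots> = detV ?V (mulV ?V (Qm k) (Bm k z yw))" by (intro detV_cong AQ_eq_QB)
  also have "\<dots> = detV ?V (Qm k :: _ \<Rightarrow> _ \<Rightarrow> 'a) * detV ?V (Bm k z yw)" by (rule detV_mult[OF finite_V])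
  also have "\<dots> = (\<Prod>x\<in>?V. z + (\<Sum>i\<in>{i\<in>{1..k}. x i}. yw i False + yw i True))"
    by (simp add: detQ detB Bdiag)
  also have "\<dots> = (\<Prod>J \<in> Pow {1..k}. z + (\<Sum>i \<in> J. yw i False + yw i True))"
    by (rule prod_V_Pow)
  finally show ?thesis .
qed


end
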